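(* Let $x,y\in\mathbb{H}^2$, let $e_1=(1,0)$, $e_2=(0,1)$, and define $$x'=\tfrac{x+y}{2}-\tfrac{|x-y|}{2}e_2,\quad y'=\tfrac{x+y}{2}+\tfrac{|x-y|}{2}e_2,\quad x''=\tfrac{x+y}{2}-\tfrac{|x-y|}{2}e_1,\quad y''=\tfrac{x+y}{2}+\tfrac{|x-y|}{2}e_1,$$ and assume $x'\in\mathbb{H}^2$ (so that $x',y',x'',y''\in\mathbb{H}^2$). Then $$\tilde\tau_{\mathbb{H}^2}(x'',y'')\le\tilde\tau_{\mathbb{H}^2}(x,y)\le\tilde\tau_{\mathbb{H}^2}(x',y').$$
   Context: $\mathbb{H}^2=\{(x_1,x_2)\in\mathbb{R}^2:x_2>0\}$ is the upper half plane. For a proper subdomain $D\subsetneq\mathbb{R}^n$ and $x,y\in D$, $\tilde\tau_D(x,y)=\log\big(1+\sup_{p\in\partial D}\frac{|x-y|}{\sqrt{|x-p||y-p|}}\big)$ (the scale invariant Cassinian metric). *)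

theory Defs
  imports "HOL-Analysis.Analysis"
begin

definition upper_half_plane :: "(real^2) set" where
  "upper_half_plane = {x. x $ 2 > 0}"

definition sic_metric :: "('a::euclidean_space) set \<Rightarrow> 'a \<Rightarrow> 'a \<Rightarrow> real" where
  "sic_metric D x y =
     ln (1 + (SUP p\<in>frontier D. dist x y / sqrt (dist x p * dist y p)))"

definition e1 :: "real^2" where "e1 = axis 1 1"
definition e2 :: "real^2" where "e2 = axis 2 1"

end

theory Submission imports Defs begin

lemma frontier_H: "frontier upper_half_plane = {p. p$2 = 0}"
proof -
  have "upper_half_plane = {x. (axis 2 1 :: real^2) \<bullet> x > 0}"
    unfolding upper_half_plane_def by (simp add: cart_eq_inner_axis inner_commute)
  moreover have "(axis 2 1 :: real^2) \<noteq> 0" by (simp add: axis_eq_0_iff)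
  ultimately have "frontier upper_half_plane = {x. (axis 2 1 :: real^2) \<bullet> x = 0}"
    using frontier_halfspace_gt by metis
  thus ?thesis by (simp add: cart_eq_inner_axis inner_commute)
qed

lemma dist2: "dist (x::real^2) y = sqrt ((x$1-y$1)^2 + (x$2-y$2)^2)"
  unfolding dist_vec_def L2_set_def sum_2 dist_real_def by simp

lemma L1:
  fixes u h v1 v2 A B :: real
  assumes "h^2 > v1^2+v2^2" "A = (u+v1)^2+(h+v2)^2" "B = (u-v1)^2+(h-v2)^2"
  shows "sqrt A * sqrt B \<ge> h^2 - (v1^2+v2^2)"
proof -
  define W where "W = u^2+h^2"
  define R where "R = v1^2+v2^2"
  define q where "q = u* v1+h* v2"
  have AB: "A*B = (W+R)^2 - 4*q^2" unfolding assms W_def R_def q_def by (simp add: algebra_simps power2_eq_square)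
  have "W*R - q^2 = (u* v2 - h* v1)^2" unfolding W_def R_def q_def by (simp add: algebra_simps power2_eq_square)
  hence s: "q^2 \<le> W*R" by (metis diff_ge_0_iff_ge zero_le_power2)
  have "W - R \<ge> h^2 - R" unfolding W_def by simp
  moreover have "h^2 - R \<ge> 0" using assms R_def by simp
  ultimately have "(h^2-R)^2 \<le> (W-R)^2" by (intro power_mono) auto
  also have "(W-R)^2 \<le> A*B" using AB s by (simp add: power2_eq_square algebra_simps)
  finally have "sqrt ((h^2-R)^2) \<le> sqrt (A*B)" by (rule real_sqrt_le_mono)
  thus ?thesis using \<open>h^2 - R \<ge> 0\<close> R_def by (simp add: real_sqrt_mult)
qed

lemma L2:
  fixes h v1 v2 A B :: real
  assumes "A = v1^2+(h+v2)^2" "B = v1^2+(h-v2)^2"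
  shows "sqrt A * sqrt B \<le> h^2 + (v1^2+v2^2)"
proof -
  have "A*B = (h^2 + (v1^2+v2^2))^2 - 4*h^2* v2^2" unfolding assms by (simp add: algebra_simps power2_eq_square)
  hence "A*B \<le> (h^2 + (v1^2+v2^2))^2" by (simp add: zero_le_mult_iff)
  hence "sqrt (A*B) \<le> sqrt ((h^2 + (v1^2+v2^2))^2)" by (rule real_sqrt_le_mono)
  thus ?thesis by (simp add: real_sqrt_mult)
qed

lemma L3:
  fixes u h r A B :: real
  assumes "h^2 > r^2" "A = (u-r)^2+h^2" "B = (u+r)^2+h^2"
  shows "sqrt A * sqrt B \<ge> h^2 + r^2"
proof -
  have "A*B = (h^2 + r^2)^2 + u^2* u^2 + 2* u^2*(h^2-r^2)" unfolding assms by (simp add: algebra_simps power2_eq_square)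
  moreover have "u^2*(h^2-r^2) \<ge> 0" using assms by simp
  ultimately have "A*B \<ge> (h^2 + r^2)^2" by (simp add: power2_eq_square)
  hence "sqrt (A*B) \<ge> sqrt ((h^2 + r^2)^2)" by (rule real_sqrt_le_mono)
  thus ?thesis by (simp add: real_sqrt_mult)
qed


lemma ln_mono1: "0 \<le> (a::real) \<Longrightarrow> a \<le> b \<Longrightarrow> ln (1+a) \<le> ln (1+b)"
  using ln_le_cancel_iff[of "1+a" "1+b"] by linarith

lemma G_div_le: "0 \<le> (d::real) \<Longrightarrow> 0 < K \<Longrightarrow> K \<le> P \<Longrightarrow> d / sqrt P \<le> d / sqrt K"
  by (intro divide_left_mono) auto

theorem lemma3p11:
  fixes x y :: "real^2"
  assumes "x \<in> upper_half_plane" and "y \<in> upper_half_plane"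
    and "(1/2) *\<^sub>R (x + y) - (dist x y / 2) *\<^sub>R e2 \<in> upper_half_plane"
  shows "sic_metric upper_half_plane ((1/2) *\<^sub>R (x + y) - (dist x y / 2) *\<^sub>R e1)
                                     ((1/2) *\<^sub>R (x + y) + (dist x y / 2) *\<^sub>R e1)
           \<le> sic_metric upper_half_plane x y
         \<and> sic_metric upper_half_plane x y
           \<le> sic_metric upper_half_plane ((1/2) *\<^sub>R (x + y) - (dist x y / 2) *\<^sub>R e2)
                                        ((1/2) *\<^sub>R (x + y) + (dist x y / 2) *\<^sub>R e2)"
proof -
  define d where "d = dist x y"
  define r where "r = d / 2"
  define m where "m = (1/2) *\<^sub>R (x + y)"
  define xpp where "xpp = m - r *\<^sub>R e1"
  define ypp where "ypp = m + r *\<^sub>R e1"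
  define xp where "xp = m - r *\<^sub>R e2"
  define yp where "yp = m + r *\<^sub>R e2"
  define h where "h = (x$2 + y$2)/2"
  define m1 where "m1 = (x$1 + y$1)/2"
  define v1 where "v1 = (x$1 - y$1)/2"
  define v2 where "v2 = (x$2 - y$2)/2"
  define F where "F = {p::real^2. p$2 = 0}"
  define G where "G = (\<lambda>(a::real^2) b p. dist a b / sqrt (dist a p * dist b p))"
  define p0 where "p0 = m - h *\<^sub>R e2"
  have e: "e1$1 = 1" "e1$2 = 0" "e2$1 = 0" "e2$2 = 1" by (simp_all add: e1_def e2_def axis_def)
  have mc: "m$1 = m1" "m$2 = h" by (simp_all add: m_def m1_def h_def)
  have xppc: "xpp$1 = m1 - r" "xpp$2 = h" by (simp_all add: xpp_def mc e)
  have yppc: "ypp$1 = m1 + r" "ypp$2 = h" by (simp_all add: ypp_def mc e)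
  have xpc: "xp$1 = m1" "xp$2 = h - r" by (simp_all add: xp_def mc e)
  have ypc: "yp$1 = m1" "yp$2 = h + r" by (simp_all add: yp_def mc e)
  have p0c: "p0$1 = m1" "p0$2 = 0" by (simp_all add: p0_def mc e)
  have p0F: "p0 \<in> F" using p0c by (simp add: F_def)
  have vv: "2* v1 = x$1-y$1" "2* v2 = x$2-y$2" by (simp_all add: v1_def v2_def)
  have d2: "d = sqrt ((2* v1)^2 + (2* v2)^2)" unfolding d_def dist2 vv ..
  have "d = sqrt (4*(v1^2+v2^2))" unfolding d2 by (simp add: power_mult_distrib)
  hence "d = 2 * sqrt (v1^2+v2^2)" by (simp only: real_sqrt_mult real_sqrt_four)
  hence rr: "r^2 = v1^2+v2^2" and r0: "r \<ge> 0" unfolding r_def by auto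
  have "xp$2 > 0" using assms(3) unfolding upper_half_plane_def xp_def m_def r_def d_def by simp
  hence hr: "h > r" using xpc by simp
  hence hr2: "h^2 > r^2" using r0 by (simp add: power_strict_mono)
  have hr2': "h^2 - r^2 > 0" using hr2 by simp
  have hr2p: "h^2 + r^2 > 0" using hr2' by (smt (verit) zero_le_power2)
  have d0: "d \<ge> 0" by (simp add: d_def)
  have dpp: "dist xpp ypp = d" unfolding dist2 xppc yppc using r0 by (simp add: r_def)
  have dp: "dist xp yp = d" unfolding dist2 xpc ypc using r0 by (simp add: r_def)
  have Gnn: "G a b p \<ge> 0" for a b p by (simp add: G_def)
  have lowxy: "dist x p * dist y p \<ge> h^2 - r^2" if "p \<in> F" for p
  proof -
    have p2: "p$2 = 0" using that by (simp add: F_def)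
    have c: "x$1-p$1 = (m1 - p$1)+v1" "x$2-p$2 = h+v2" "y$1-p$1 = (m1 - p$1)-v1" "y$2-p$2 = h-v2"
      using p2 by (simp_all add: m1_def v1_def v2_def h_def field_simps)
    have eA: "(x$1-p$1)^2+(x$2-p$2)^2 = ((m1 - p$1)+v1)^2+(h+v2)^2" by (simp only: c)
    have eB: "(y$1-p$1)^2+(y$2-p$2)^2 = ((m1 - p$1)-v1)^2+(h-v2)^2" by (simp only: c)
    show ?thesis unfolding dist2
      using L1[OF _ eA eB] hr2 rr by simp
  qed
  have lowp: "dist xp p * dist yp p \<ge> h^2 - r^2" if "p \<in> F" for p
  proof -
    have p2: "p$2 = 0" using that by (simp add: F_def)
    have eA: "(xp$1-p$1)^2+(xp$2-p$2)^2 = ((m1 - p$1)+0)^2+(h+(-r))^2"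
      using p2 xpc by simp
    have eB: "(yp$1-p$1)^2+(yp$2-p$2)^2 = ((m1 - p$1)-0)^2+(h-(-r))^2"
      using p2 ypc by simp
    have "h^2 > 0^2 + (-r)^2" using hr2 by simp
    from L1[OF this eA eB] show ?thesis unfolding dist2 by simp
  qed
  have lowpp: "dist xpp p * dist ypp p \<ge> h^2 + r^2" if "p \<in> F" for p
  proof -
    have p2: "p$2 = 0" using that by (simp add: F_def)
    have eA: "(xpp$1-p$1)^2+(xpp$2-p$2)^2 = ((m1 - p$1)-r)^2+h^2"
      unfolding p2 xppc by (simp add: algebra_simps)
    have eB: "(ypp$1-p$1)^2+(ypp$2-p$2)^2 = ((m1 - p$1)+r)^2+h^2"
      unfolding p2 yppc by (simp add: algebra_simps)
    from L3[OF hr2 eA eB] show ?thesis unfolding dist2 .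
  qed
  have upxy0: "dist x p0 * dist y p0 \<le> h^2 + r^2"
  proof -
    have c: "x$1-p0$1 = v1" "x$2-p0$2 = h+v2" "y$1-p0$1 = -v1" "y$2-p0$2 = h-v2"
      using p0c by (simp_all add: m1_def v1_def v2_def h_def field_simps)
    have eA: "(x$1-p0$1)^2+(x$2-p0$2)^2 = v1^2+(h+v2)^2" by (simp only: c)
    have eB: "(y$1-p0$1)^2+(y$2-p0$2)^2 = v1^2+(h-v2)^2" by (simp add: c)
    from L2[OF eA eB] show ?thesis unfolding dist2 rr .
  qed
  have p0p: "dist xp p0 * dist yp p0 = h^2 - r^2"
  proof -
    have e1: "dist xp p0 = h - r" unfolding dist2 xpc p0c using hr by simp
    have e2: "dist yp p0 = h + r" unfolding dist2 ypc p0c using hr r0 by simp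
    show ?thesis unfolding e1 e2 by (simp add: power2_eq_square algebra_simps)
  qed
  have Gxy: "G x y p \<le> d / sqrt (h^2 - r^2)" if "p \<in> F" for p
    unfolding G_def using G_div_le[OF d0 hr2' lowxy[OF that]] by (simp add: d_def)
  have Gp: "G xp yp p \<le> d / sqrt (h^2 - r^2)" if "p \<in> F" for p
    unfolding G_def dp using G_div_le[OF d0 hr2' lowp[OF that]] by simp
  have Gpp: "G xpp ypp p \<le> d / sqrt (h^2 + r^2)" if "p \<in> F" for p
    unfolding G_def dpp using G_div_le[OF d0 hr2p lowpp[OF that]] by simp
  have Gxy0: "d / sqrt (h^2 + r^2) \<le> G x y p0"
    unfolding G_def using G_div_le[OF d0 _ upxy0] lowxy[OF p0F] hr2' by (simp add: d_def)
  have Gp0: "G xp yp p0 = d / sqrt (h^2 - r^2)" unfolding G_def dp p0p by simp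
  have Fne: "F \<noteq> {}" using p0F by auto
  have bxy: "bdd_above (G x y ` F)" by (rule bdd_aboveI2[OF Gxy])
  have bp: "bdd_above (G xp yp ` F)" by (rule bdd_aboveI2[OF Gp])
  have S1: "(SUP p\<in>F. G xpp ypp p) \<le> (SUP p\<in>F. G x y p)"
  proof -
    have "(SUP p\<in>F. G xpp ypp p) \<le> d / sqrt (h^2 + r^2)" by (rule cSUP_least[OF Fne Gpp])
    also have "\<dots> \<le> G x y p0" by (rule Gxy0)
    also have "\<dots> \<le> (SUP p\<in>F. G x y p)" by (rule cSUP_upper[OF p0F bxy])
    finally show ?thesis .
  qed
  have S2: "(SUP p\<in>F. G x y p) \<le> (SUP p\<in>F. G xp yp p)"
  proof -
    have "(SUP p\<in>F. G x y p) \<le> d / sqrt (h^2 - r^2)" by (rule cSUP_least[OF Fne Gxy])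
    also have "\<dots> = G xp yp p0" by (rule Gp0[symmetric])
    also have "\<dots> \<le> (SUP p\<in>F. G xp yp p)" by (rule cSUP_upper[OF p0F bp])
    finally show ?thesis .
  qed
  have nn1: "0 \<le> (SUP p\<in>F. G xpp ypp p)"
    using Gnn order_trans cSUP_upper[OF p0F] Gpp by (meson bdd_aboveI2)
  have nn2: "0 \<le> (SUP p\<in>F. G x y p)"
    using Gnn order_trans cSUP_upper[OF p0F bxy] by blast
  have "sic_metric upper_half_plane xpp ypp \<le> sic_metric upper_half_plane x y
        \<and> sic_metric upper_half_plane x y \<le> sic_metric upper_half_plane xp yp"
    unfolding sic_metric_def frontier_H F_def[symmetric]
    using ln_mono1[OF nn1 S1] ln_mono1[OF nn2 S2] unfolding G_def by simp
  thus ?thesis unfolding xpp_def ypp_def xp_def yp_def m_def r_def d_def .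
qed

end
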